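(* For every positive integer $n$, the pairs $(2n,3n)$ and $(2n,5n)$ are tame; that is, for every integer $c>3n$ there is a tame polynomial automorphism of $\mathbb{C}^3$ with multidegree $(2n,3n,c)$, and for every integer $c>5n$ there is a tame polynomial automorphism of $\mathbb{C}^3$ with multidegree $(2n,5n,c)$.
   Context: For a polynomial automorphism $F=(F_1,\ldots,F_n)$ of $\mathbb{C}^n$, its multidegree is $\operatorname{mdeg}F:=(\deg F_1,\ldots,\deg F_n)$, where $\deg$ is total degree. A map is elementary if it changes one coordinate $X_j$ to $X_j+g$ with $g$ a polynomial in the other variables and fixes the remaining coordinates. A polynomial automorphism is tame if it is a composition of invertible affine-linear maps and elementary maps. A pair $(a,b)$ of positive integers with $a<b$ and $a\nmid b$ is called tame if for every integer $c>b$ there exists a tame polynomial automorphism of $\mathbb{C}^3$ with multidegree $(a,b,c)$. *)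

theory Defs
  imports Complex_Main "HOL-Library.Poly_Mapping"
begin

text \<open>Polynomials in the variables X_0, X_1, X_2 over the complex numbers,
  represented as finitely supported maps from exponent vectors to coefficients.\<close>
type_synonym mpoly = "(nat \<Rightarrow>\<^sub>0 nat) \<Rightarrow>\<^sub>0 complex"

type_synonym pt3 = "complex \<times> complex \<times> complex"

definition vars :: "mpoly \<Rightarrow> nat set" where
  "vars p = (\<Union>m\<in>Poly_Mapping.keys p. Poly_Mapping.keys (m :: nat \<Rightarrow>\<^sub>0 nat))"

definition poly3 :: "mpoly \<Rightarrow> bool" where
  "poly3 p \<longleftrightarrow> vars p \<subseteq> {0, 1, 2}"

text \<open>Total degree (the zero polynomial gets degree 0 by convention).\<close>
definition tdeg :: "mpoly \<Rightarrow> nat" where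
  "tdeg p = Max (insert 0 ((\<lambda>m. sum (Poly_Mapping.lookup m) (Poly_Mapping.keys m)) ` Poly_Mapping.keys p))"

definition ev3 :: "mpoly \<Rightarrow> pt3 \<Rightarrow> complex" where
  "ev3 p v = (case v of (x, y, z) \<Rightarrow>
     (\<Sum>m\<in>Poly_Mapping.keys p. Poly_Mapping.lookup p m * x ^ Poly_Mapping.lookup m 0 * y ^ Poly_Mapping.lookup m 1 * z ^ Poly_Mapping.lookup m 2))"

definition polymap :: "mpoly \<Rightarrow> mpoly \<Rightarrow> mpoly \<Rightarrow> pt3 \<Rightarrow> pt3" where
  "polymap F1 F2 F3 = (\<lambda>v. (ev3 F1 v, ev3 F2 v, ev3 F3 v))"

definition mdeg :: "mpoly \<Rightarrow> mpoly \<Rightarrow> mpoly \<Rightarrow> nat \<times> nat \<times> nat" where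
  "mdeg F1 F2 F3 = (tdeg F1, tdeg F2, tdeg F3)"

definition affine_inv :: "(pt3 \<Rightarrow> pt3) \<Rightarrow> bool" where
  "affine_inv f \<longleftrightarrow> bij f \<and>
     (\<exists>P Q R. poly3 P \<and> poly3 Q \<and> poly3 R \<and> tdeg P \<le> 1 \<and> tdeg Q \<le> 1 \<and> tdeg R \<le> 1
              \<and> f = polymap P Q R)"

definition elementary :: "(pt3 \<Rightarrow> pt3) \<Rightarrow> bool" where
  "elementary f \<longleftrightarrow> (\<exists>j g. j \<in> {0, 1, 2} \<and> vars g \<subseteq> {0, 1, 2} - {j} \<and>
     f = (\<lambda>(x, y, z). (if j = 0 then x + ev3 g (x, y, z) else x,
                        if j = 1 then y + ev3 g (x, y, z) else y,
                        if j = 2 then z + ev3 g (x, y, z) else z)))"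

inductive_set tame_maps :: "(pt3 \<Rightarrow> pt3) set" where
  tame_id: "id \<in> tame_maps"
| tame_aff: "f \<in> tame_maps \<Longrightarrow> affine_inv g \<Longrightarrow> g \<circ> f \<in> tame_maps"
| tame_elem: "f \<in> tame_maps \<Longrightarrow> elementary g \<Longrightarrow> g \<circ> f \<in> tame_maps"

definition tame_automorphism :: "mpoly \<Rightarrow> mpoly \<Rightarrow> mpoly \<Rightarrow> bool" where
  "tame_automorphism F1 F2 F3 \<longleftrightarrow> poly3 F1 \<and> poly3 F2 \<and> poly3 F3 \<and>
     polymap F1 F2 F3 \<in> tame_maps"

definition tame_pair :: "nat \<Rightarrow> nat \<Rightarrow> bool" where
  "tame_pair a b \<longleftrightarrow> 0 < a \<and> a < b \<and> \<not> a dvd b \<and>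
     (\<forall>c::nat. c > b \<longrightarrow> (\<exists>F1 F2 F3. tame_automorphism F1 F2 F3 \<and> mdeg F1 F2 F3 = (a, b, c)))"

end

theory Submission
  imports Defs "HOL-Computational_Algebra.Polynomial"
begin

definition mon :: "(nat \<Rightarrow>\<^sub>0 nat) \<Rightarrow> pt3 \<Rightarrow> complex" where
  "mon m v = (case v of (x, y, z) \<Rightarrow> x ^ Poly_Mapping.lookup m 0 * y ^ Poly_Mapping.lookup m 1 * z ^ Poly_Mapping.lookup m 2)"

lemma ev3_mon: "ev3 p v = (\<Sum>m\<in>Poly_Mapping.keys p. Poly_Mapping.lookup p m * mon m v)"
  by (cases v) (simp add: ev3_def mon_def mult.assoc)

lemma ev3_superset:
  assumes "finite A" "Poly_Mapping.keys p \<subseteq> A"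
  shows "ev3 p v = (\<Sum>m\<in>A. Poly_Mapping.lookup p m * mon m v)"
  unfolding ev3_mon
  by (rule sum.mono_neutral_left) (use assms in \<open>auto simp: in_keys_iff\<close>)

lemma mon_add: "mon (a + b) v = mon a v * mon b v"
  by (cases v) (simp add: mon_def lookup_add power_add)

lemma mon_0: "mon 0 v = 1"
  by (cases v) (simp add: mon_def)

lemma ev3_0 [simp]: "ev3 0 v = 0"
  by (simp add: ev3_mon)

lemma ev3_add [simp]: "ev3 (p + q) v = ev3 p v + ev3 q v"
proof -
  let ?A = "Poly_Mapping.keys p \<union> Poly_Mapping.keys q"
  have "ev3 (p + q) v = (\<Sum>m\<in>?A. Poly_Mapping.lookup (p+q) m * mon m v)"
    by (rule ev3_superset) (auto simp: keys_add)
  also have "\<dots> = (\<Sum>m\<in>?A. Poly_Mapping.lookup p m * mon m v) + (\<Sum>m\<in>?A. Poly_Mapping.lookup q m * mon m v)"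
    by (simp add: lookup_add distrib_right sum.distrib)
  also have "\<dots> = ev3 p v + ev3 q v"
    by (simp add: ev3_superset[symmetric])
  finally show ?thesis .
qed

lemma ev3_single [simp]: "ev3 (Poly_Mapping.single m c) v = c * mon m v"
  by (simp add: ev3_mon)

lemma ev3_sum: "finite I \<Longrightarrow> ev3 (\<Sum>i\<in>I. f i) v = (\<Sum>i\<in>I. ev3 (f i) v)"
  by (induction I rule: finite_induct) auto

lemma ev3_uminus [simp]: "ev3 (- p) v = - ev3 p v"
proof -
  have h: "ev3 p v + ev3 (- p) v = 0" using ev3_add[of p "-p" v] by simp
  show ?thesis using h neg_eq_iff_add_eq_0 by metis
qed

lemma ev3_diff [simp]: "ev3 (p - q) v = ev3 p v - ev3 q v"
  using ev3_add[of p "-q" v] by simp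

lemma pm_decomp: "p = (\<Sum>m\<in>Poly_Mapping.keys p. Poly_Mapping.single m (Poly_Mapping.lookup p m))"
proof (rule poly_mapping_eqI)
  fix k
  have "Poly_Mapping.lookup (\<Sum>m\<in>Poly_Mapping.keys p. Poly_Mapping.single m (Poly_Mapping.lookup p m)) k
     = (\<Sum>m\<in>Poly_Mapping.keys p. (if m = k then Poly_Mapping.lookup p m else 0))"
    by (simp add: lookup_sum lookup_single when_def)
  also have "\<dots> = Poly_Mapping.lookup p k"
    by (simp add: in_keys_iff)
  finally show "Poly_Mapping.lookup p k = Poly_Mapping.lookup (\<Sum>m\<in>Poly_Mapping.keys p. Poly_Mapping.single m (Poly_Mapping.lookup p m)) k" by simp
qed

lemma ev3_single_mult: "ev3 (Poly_Mapping.single a c * q) v = c * mon a v * ev3 q v"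
proof -
  have "Poly_Mapping.single a c * q = Poly_Mapping.single a c * (\<Sum>m\<in>Poly_Mapping.keys q. Poly_Mapping.single m (Poly_Mapping.lookup q m))"
    by (subst pm_decomp[of q]) simp
  also have "\<dots> = (\<Sum>m\<in>Poly_Mapping.keys q. Poly_Mapping.single (a + m) (c * Poly_Mapping.lookup q m))"
    by (simp add: sum_distrib_left mult_single)
  finally have "ev3 (Poly_Mapping.single a c * q) v = (\<Sum>m\<in>Poly_Mapping.keys q. c * Poly_Mapping.lookup q m * mon (a + m) v)"
    by (simp add: ev3_sum)
  also have "\<dots> = c * mon a v * ev3 q v"
    by (simp add: ev3_mon sum_distrib_left mon_add mult_ac)
  finally show ?thesis .
qed

lemma ev3_mult [simp]: "ev3 (p * q) v = ev3 p v * ev3 q v"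
proof -
  have "p * q = (\<Sum>m\<in>Poly_Mapping.keys p. Poly_Mapping.single m (Poly_Mapping.lookup p m) * q)"
    by (subst pm_decomp[of p]) (simp add: sum_distrib_right)
  then have "ev3 (p * q) v = (\<Sum>m\<in>Poly_Mapping.keys p. Poly_Mapping.lookup p m * mon m v * ev3 q v)"
    by (simp add: ev3_sum ev3_single_mult)
  also have "\<dots> = ev3 p v * ev3 q v"
    by (simp add: ev3_mon sum_distrib_right)
  finally show ?thesis .
qed

lemma ev3_one [simp]: "ev3 1 v = 1"
  using ev3_single[of 0 1 v] by (simp add: mon_0)

lemma ev3_power [simp]: "ev3 (p ^ k) v = ev3 p v ^ k"
  by (induction k) auto

lemma ev3_numeral [simp]: "ev3 (numeral k) v = numeral k"
  using ev3_single[of 0 "numeral k" v] by (simp add: mon_0)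

definition X :: "nat \<Rightarrow> mpoly" where
  "X i = Poly_Mapping.single (Poly_Mapping.single i 1) 1"

lemma ev3_X0 [simp]: "ev3 (X 0) (x, y, z) = x"
  by (simp add: X_def mon_def lookup_single)
lemma ev3_X1 [simp]: "ev3 (X 1) (x, y, z) = y"
  by (simp add: X_def mon_def lookup_single)
lemma ev3_X1' [simp]: "ev3 (X (Suc 0)) (x, y, z) = y"
  by (simp add: X_def mon_def lookup_single)
lemma ev3_X2 [simp]: "ev3 (X 2) (x, y, z) = z"
  by (simp add: X_def mon_def lookup_single)

lemma vars_add: "vars (p + q) \<subseteq> vars p \<union> vars q"
  unfolding vars_def using keys_add[of p q] by blast

lemma vars_uminus [simp]: "vars (- p) = vars p"
  unfolding vars_def by simp

lemma vars_diff: "vars (p - q) \<subseteq> vars p \<union> vars q"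
  using vars_add[of p "-q"] by simp

lemma vars_mult: "vars (p * q) \<subseteq> vars p \<union> vars q"
proof
  fix i assume "i \<in> vars (p * q)"
  then obtain m where m: "m \<in> Poly_Mapping.keys (p * q)" "i \<in> Poly_Mapping.keys m"
    unfolding vars_def by blast
  then obtain a b where "m = a + b" "a \<in> Poly_Mapping.keys p" "b \<in> Poly_Mapping.keys q"
    using keys_mult[of p q] by blast
  then show "i \<in> vars p \<union> vars q"
    using m(2) keys_add[of a b] unfolding vars_def by blast
qed

lemma vars_one [simp]: "vars 1 = {}"
  by (simp add: vars_def)

lemma vars_power: "vars (p ^ k) \<subseteq> vars p"
  by (induction k) (use vars_mult in auto)

lemma vars_numeral [simp]: "vars (numeral k) = {}"
  by (simp add: vars_def flip: single_numeral)

lemma vars_X [simp]: "vars (X i) = {i}"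
  by (simp add: vars_def X_def)

definition mdg :: "(nat \<Rightarrow>\<^sub>0 nat) \<Rightarrow> nat" where
  "mdg m = sum (Poly_Mapping.lookup m) (Poly_Mapping.keys m)"

lemma tdeg_alt: "tdeg p = Max (insert 0 (mdg ` Poly_Mapping.keys p))"
  by (simp add: tdeg_def mdg_def)

lemma tdeg_le: "(\<And>m. m \<in> Poly_Mapping.keys p \<Longrightarrow> mdg m \<le> d) \<Longrightarrow> tdeg p \<le> d"
  unfolding tdeg_alt by (simp add: Max_le_iff)

lemma tdeg_ge: "m \<in> Poly_Mapping.keys p \<Longrightarrow> mdg m \<le> tdeg p"
  unfolding tdeg_alt by (rule Max_ge) auto

lemma mdg_superset: "finite A \<Longrightarrow> Poly_Mapping.keys m \<subseteq> A \<Longrightarrow> mdg m = sum (Poly_Mapping.lookup m) A"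
  unfolding mdg_def by (rule sum.mono_neutral_left) (auto simp: in_keys_iff)

lemma mdg_add: "mdg (a + b) = mdg a + mdg b"
proof -
  let ?A = "Poly_Mapping.keys a \<union> Poly_Mapping.keys b"
  have "mdg (a + b) = sum (Poly_Mapping.lookup (a+b)) ?A"
    by (rule mdg_superset) (auto simp: keys_add)
  also have "\<dots> = sum (Poly_Mapping.lookup a) ?A + sum (Poly_Mapping.lookup b) ?A"
    by (simp add: lookup_add sum.distrib)
  also have "\<dots> = mdg a + mdg b"
    using mdg_superset[of ?A a] mdg_superset[of ?A b] by simp
  finally show ?thesis .
qed

lemma mdg_single [simp]: "mdg (Poly_Mapping.single i d) = d"
  by (simp add: mdg_def)

lemma tdeg_add: "tdeg (p + q) \<le> max (tdeg p) (tdeg q)"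
  apply (rule tdeg_le)
  using keys_add[of p q] tdeg_ge[of _ p] tdeg_ge[of _ q] by fastforce

lemma tdeg_uminus [simp]: "tdeg (- p) = tdeg p"
  by (simp add: tdeg_alt)

lemma tdeg_diff: "tdeg (p - q) \<le> max (tdeg p) (tdeg q)"
  using tdeg_add[of p "-q"] by simp

lemma tdeg_mult: "tdeg (p * q) \<le> tdeg p + tdeg q"
proof (rule tdeg_le)
  fix m assume "m \<in> Poly_Mapping.keys (p * q)"
  then obtain a b where "m = a + b" "a \<in> Poly_Mapping.keys p" "b \<in> Poly_Mapping.keys q"
    using keys_mult[of p q] by blast
  then show "mdg m \<le> tdeg p + tdeg q"
    using tdeg_ge[of a p] tdeg_ge[of b q] by (simp add: mdg_add)
qed

lemma tdeg_one [simp]: "tdeg 1 = 0"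
  by (simp add: tdeg_alt mdg_def)

lemma tdeg_power: "tdeg (p ^ k) \<le> k * tdeg p"
proof (induction k)
  case (Suc k)
  then show ?case using tdeg_mult[of p "p^k"] by simp
qed simp

lemma tdeg_numeral [simp]: "tdeg (numeral k) = 0"
  by (simp add: tdeg_alt mdg_def flip: single_numeral)

lemma tdeg_X [simp]: "tdeg (X i) = 1"
  by (simp add: tdeg_alt X_def)

lemma tdeg_num_mult: "tdeg (numeral k * p) \<le> tdeg p"
  using tdeg_mult[of "numeral k" p] by simp

lemma tdeg_Xpow: "tdeg (X i ^ k) \<le> k"
  by (metis mult.right_neutral tdeg_X tdeg_power)

lemma coeff_restrict:
  fixes q :: "complex poly"
  assumes p3: "poly3 p" and ev: "\<And>t. ev3 p (0, 0, t) = poly q t"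
  shows "Poly_Mapping.lookup p (Poly_Mapping.single 2 d) = coeff q d"
proof -
  define r where "r = (\<Sum>m\<in>Poly_Mapping.keys p. monom (Poly_Mapping.lookup p m * 0 ^ Poly_Mapping.lookup m 0 * 0 ^ Poly_Mapping.lookup m 1) (Poly_Mapping.lookup m 2))"
  have "poly r t = ev3 p (0, 0, t)" for t
    by (simp add: r_def ev3_def poly_sum poly_monom mult_ac)
  then have "poly r = poly q" using ev by auto
  then have rq: "r = q" by (simp add: poly_eq_poly_eq_iff)
  have "coeff r d = (\<Sum>m\<in>Poly_Mapping.keys p. (if m = Poly_Mapping.single 2 d then Poly_Mapping.lookup p m else 0))"
  proof -
    have "coeff r d = (\<Sum>m\<in>Poly_Mapping.keys p. (if d = Poly_Mapping.lookup m 2 then Poly_Mapping.lookup p m * 0 ^ Poly_Mapping.lookup m 0 * 0 ^ Poly_Mapping.lookup m 1 else 0))"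
      unfolding r_def coeff_sum coeff_monom by (rule sum.cong) auto
    also have "\<dots> = (\<Sum>m\<in>Poly_Mapping.keys p. (if m = Poly_Mapping.single 2 d then Poly_Mapping.lookup p m else 0))"
    proof (rule sum.cong[OF refl])
      fix m assume mk: "m \<in> Poly_Mapping.keys p"
      then have km: "Poly_Mapping.keys m \<subseteq> {0,1,2}" using p3 unfolding poly3_def vars_def by blast
      show "(if d = Poly_Mapping.lookup m 2 then Poly_Mapping.lookup p m * 0 ^ Poly_Mapping.lookup m 0 * 0 ^ Poly_Mapping.lookup m 1 else 0) =
            (if m = Poly_Mapping.single 2 d then Poly_Mapping.lookup p m else 0)"
      proof (cases "m = Poly_Mapping.single 2 d")
        case True then show ?thesis by (simp add: lookup_single)
      next
        case False
        have "\<not> (d = Poly_Mapping.lookup m 2 \<and> Poly_Mapping.lookup m 0 = 0 \<and> Poly_Mapping.lookup m 1 = 0)"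
        proof
          assume h: "d = Poly_Mapping.lookup m 2 \<and> Poly_Mapping.lookup m 0 = 0 \<and> Poly_Mapping.lookup m 1 = 0"
          have "m = Poly_Mapping.single 2 d"
          proof (rule poly_mapping_eqI)
            fix k show "Poly_Mapping.lookup m k = Poly_Mapping.lookup (Poly_Mapping.single 2 d) k"
              using h km by (cases "k \<in> {0,1,2}") (auto simp: lookup_single in_keys_iff)
          qed
          with False show False by simp
        qed
        then show ?thesis using False by auto
      qed
    qed
    finally show ?thesis .
  qed
  also have "\<dots> = Poly_Mapping.lookup p (Poly_Mapping.single 2 d)"
    by (simp add: in_keys_iff)
  finally show ?thesis using rq by simp
qed

lemma tdeg_lower:
  fixes q :: "complex poly"
  assumes "poly3 p" "\<And>t. ev3 p (0, 0, t) = poly q t" "coeff q d \<noteq> 0"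
  shows "d \<le> tdeg p"
proof -
  have "Poly_Mapping.single 2 d \<in> Poly_Mapping.keys p"
    using coeff_restrict[OF assms(1,2)] assms(3) by (simp add: in_keys_iff)
  from tdeg_ge[OF this] show ?thesis by simp
qed

lemma vars_addI: "vars p \<subseteq> S \<Longrightarrow> vars q \<subseteq> S \<Longrightarrow> vars (p + q) \<subseteq> S"
  using vars_add by blast
lemma vars_diffI: "vars p \<subseteq> S \<Longrightarrow> vars q \<subseteq> S \<Longrightarrow> vars (p - q) \<subseteq> S"
  using vars_diff by blast
lemma vars_multI: "vars p \<subseteq> S \<Longrightarrow> vars q \<subseteq> S \<Longrightarrow> vars (p * q) \<subseteq> S"
  using vars_mult by blast
lemma vars_powerI: "vars p \<subseteq> S \<Longrightarrow> vars (p ^ k) \<subseteq> S"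
  using vars_power by blast
lemma vars_numI: "vars (numeral k) \<subseteq> S" by simp
lemma vars_XI: "i \<in> S \<Longrightarrow> vars (X i) \<subseteq> S" by (metis vars_X empty_subsetI insert_subset)
lemmas vars_I = vars_addI vars_diffI vars_multI vars_powerI vars_numI vars_XI

lemma tame3:
  assumes "vars g1 \<subseteq> {1,2}" "vars g2 \<subseteq> {0,2}" "vars g3 \<subseteq> {0,1}"
  shows "(\<lambda>(x,y,z). (x + ev3 g1 (x,y,z), y + ev3 g2 (x + ev3 g1 (x,y,z), y, z),
            z + ev3 g3 (x + ev3 g1 (x,y,z), y + ev3 g2 (x + ev3 g1 (x,y,z), y, z), z))) \<in> tame_maps"
proof -
  define e1 :: "pt3 \<Rightarrow> pt3" where "e1 = (\<lambda>(x,y,z). (x + ev3 g1 (x,y,z), y, z))"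
  define e2 :: "pt3 \<Rightarrow> pt3" where "e2 = (\<lambda>(x,y,z). (x, y + ev3 g2 (x,y,z), z))"
  define e3 :: "pt3 \<Rightarrow> pt3" where "e3 = (\<lambda>(x,y,z). (x, y, z + ev3 g3 (x,y,z)))"
  have "elementary e1" unfolding elementary_def e1_def
    by (rule exI[of _ 0], rule exI[of _ g1]) (use assms in auto)
  moreover have "elementary e2" unfolding elementary_def e2_def
    by (rule exI[of _ 1], rule exI[of _ g2]) (use assms in auto)
  moreover have "elementary e3" unfolding elementary_def e3_def
    by (rule exI[of _ 2], rule exI[of _ g3]) (use assms in auto)
  ultimately have "e3 \<circ> (e2 \<circ> (e1 \<circ> id)) \<in> tame_maps"
    by (intro tame_maps.intros)
  moreover have "e3 \<circ> (e2 \<circ> (e1 \<circ> id)) = (\<lambda>(x,y,z). (x + ev3 g1 (x,y,z), y + ev3 g2 (x + ev3 g1 (x,y,z), y, z),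
            z + ev3 g3 (x + ev3 g1 (x,y,z), y + ev3 g2 (x + ev3 g1 (x,y,z), y, z), z)))"
    by (auto simp: e1_def e2_def e3_def fun_eq_iff)
  ultimately show ?thesis by simp
qed

lemma construct:
  assumes "vars g1 \<subseteq> {1,2}" "vars g2 \<subseteq> {0,2}" "vars g3 \<subseteq> {0,1}"
    and "poly3 F1" "poly3 F2" "poly3 F3"
    and e1: "\<And>x y z. ev3 F1 (x,y,z) = x + ev3 g1 (x,y,z)"
    and e2: "\<And>x y z. ev3 F2 (x,y,z) = y + ev3 g2 (ev3 F1 (x,y,z), y, z)"
    and e3: "\<And>x y z. ev3 F3 (x,y,z) = z + ev3 g3 (ev3 F1 (x,y,z), ev3 F2 (x,y,z), z)"
  shows "tame_automorphism F1 F2 F3"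
proof -
  have "polymap F1 F2 F3 = (\<lambda>(x,y,z). (x + ev3 g1 (x,y,z), y + ev3 g2 (x + ev3 g1 (x,y,z), y, z),
            z + ev3 g3 (x + ev3 g1 (x,y,z), y + ev3 g2 (x + ev3 g1 (x,y,z), y, z), z)))"
    by (auto simp: polymap_def fun_eq_iff e1 e2 e3 simp del: ev3_add ev3_mult)
  with tame3[OF assms(1-3)] assms(4-6) show ?thesis
    unfolding tame_automorphism_def by simp
qed

lemma tm: "tdeg p \<le> a \<Longrightarrow> tdeg q \<le> b \<Longrightarrow> tdeg (p * q) \<le> a + b"
  using tdeg_mult[of p q] by linarith
lemma tn: "tdeg p \<le> a \<Longrightarrow> tdeg (numeral k * p) \<le> a"
  using tdeg_num_mult[of k p] by linarith
lemma tp: "tdeg p \<le> a \<Longrightarrow> tdeg (p ^ k) \<le> k * a"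
  using tdeg_power[of p k] mult_le_mono2[of "tdeg p" a k] by linarith
lemma ta: "tdeg p \<le> a \<Longrightarrow> tdeg q \<le> a \<Longrightarrow> tdeg (p + q) \<le> a"
  using tdeg_add[of p q] by linarith
lemma td: "tdeg p \<le> a \<Longrightarrow> tdeg q \<le> a \<Longrightarrow> tdeg (p - q) \<le> a"
  using tdeg_diff[of p q] by linarith
lemma tw: "tdeg p \<le> a \<Longrightarrow> a \<le> b \<Longrightarrow> tdeg p \<le> b"
  by linarith

lemma tX: "tdeg (X i) \<le> 1" by (metis tdeg_X order_refl)

lemma poly3_I: "vars p \<subseteq> {0,1,2} \<Longrightarrow> poly3 p" by (simp add: poly3_def)

definition A1 :: "nat \<Rightarrow> mpoly" where "A1 n = X 0 + 4 * (X 2 ^ n)^2"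
definition A2 :: "nat \<Rightarrow> nat \<Rightarrow> mpoly" where
  "A2 n b = X 1 + X 2 ^ b + 3 * X 2 ^ n * X 0 + 8 * (X 2 ^ n)^3"
definition A3 :: "nat \<Rightarrow> nat \<Rightarrow> nat \<Rightarrow> mpoly" where
  "A3 n b k = X 2 + (A2 n b ^ 2 - A1 n ^ 3) * A1 n ^ k"

lemma A_poly3: "poly3 (A1 n)" "poly3 (A2 n b)" "poly3 (A3 n b k)"
  unfolding A1_def A2_def A3_def by (intro poly3_I vars_I; simp)+

lemma A_tame: "tame_automorphism (A1 n) (A2 n b) (A3 n b k)"
proof (rule construct[of "4 * (X 2 ^ n)^2" "X 2 ^ b + 3 * X 2 ^ n * (X 0 - 4 * (X 2 ^ n)^2) + 8 * (X 2 ^ n)^3"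
      "(X 1 ^ 2 - X 0 ^ 3) * X 0 ^ k"])
  show "vars (4 * (X 2 ^ n)^2) \<subseteq> {1,2}" by (intro vars_I; simp)
  show "vars (X 2 ^ b + 3 * X 2 ^ n * (X 0 - 4 * (X 2 ^ n)^2) + 8 * (X 2 ^ n)^3) \<subseteq> {0,2}" by (intro vars_I; simp)
  show "vars ((X 1 ^ 2 - X 0 ^ 3) * X 0 ^ k) \<subseteq> {0,1}" by (intro vars_I; simp)
  show "poly3 (A1 n)" "poly3 (A2 n b)" "poly3 (A3 n b k)" by (rule A_poly3)+
qed (simp_all add: A1_def A2_def A3_def algebra_simps)

lemma A1_deg: "0 < n \<Longrightarrow> tdeg (A1 n) = 2 * n"
proof (rule antisym)
  assume n: "0 < n"
  have "tdeg (X 0) \<le> 2 * n" using tX[of 0] n by linarith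
  moreover have "tdeg (4 * (X 2 ^ n)^2) \<le> 2 * n" by (rule tn, rule tw[OF tp[OF tdeg_Xpow]]) simp
  ultimately show "tdeg (A1 n) \<le> 2 * n" unfolding A1_def by (rule ta)
  have "\<And>t. ev3 (A1 n) (0,0,t) = poly (monom 4 (2*n)) t"
    by (simp add: A1_def poly_monom power_mult mult.commute)
  then show "2 * n \<le> tdeg (A1 n)"
    by (rule tdeg_lower[OF A_poly3(1)]) simp
qed

lemma A2_deg: assumes "0 < n" "1 \<le> b" "b < 3 * n" shows "tdeg (A2 n b) = 3 * n"
proof (rule antisym)
  have "tdeg (X 1) \<le> 3 * n" using tX[of 1] assms by linarith
  moreover have "tdeg (X 2 ^ b) \<le> 3 * n" using tdeg_Xpow[of 2 b] assms by linarith
  moreover have "tdeg (3 * X 2 ^ n * X 0) \<le> 3 * n"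
    by (rule tw[OF tm[OF tn[OF tdeg_Xpow] tX]]) (use assms in linarith)
  moreover have "tdeg (8 * (X 2 ^ n)^3) \<le> 3 * n"
    by (rule tn, rule tw[OF tp[OF tdeg_Xpow]]) simp
  ultimately show "tdeg (A2 n b) \<le> 3 * n" unfolding A2_def by (intro ta)
  have "\<And>t. ev3 (A2 n b) (0,0,t) = poly (monom 1 b + monom 8 (3*n)) t"
    by (simp add: A2_def poly_monom power_mult mult.commute)
  then show "3 * n \<le> tdeg (A2 n b)"
    by (rule tdeg_lower[OF A_poly3(2)]) (use assms in simp)
qed

lemma A_L: "A2 n b ^ 2 - A1 n ^ 3 = 16 * (X 2 ^ n)^3 * (X 1 + X 2 ^ b) - 3 * (X 2 ^ n)^2 * X 0 ^ 2 - X 0 ^ 3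
   + 6 * X 2 ^ n * X 0 * (X 1 + X 2 ^ b) + (X 1 + X 2 ^ b)^2"
  unfolding A1_def A2_def by (simp add: power2_eq_square power3_eq_cube algebra_simps)

lemma A_cx: "(t::complex) + ((B + 8*T^3)^2 - (4*T^2)^3)*(4*T^2)^k = t + 16*4^k*(T^3*B*(T^2)^k) + 4^k*(B^2*(T^2)^k)"
  by (simp add: power_mult_distrib power2_eq_square power3_eq_cube algebra_simps)

lemma A3_deg: assumes "0 < n" "1 \<le> b" "b < 3 * n" shows "tdeg (A3 n b k) = 3 * n + b + 2 * n * k"
proof (rule antisym)
  have hb: "tdeg (X 1 + X 2 ^ b) \<le> b"
    by (rule ta) (use tX[of 1] tdeg_Xpow[of 2 b] assms in linarith)+
  have h1: "tdeg (16 * (X 2 ^ n)^3 * (X 1 + X 2 ^ b)) \<le> 3 * n + b"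
    by (rule tw[OF tm[OF tn[OF tp[OF tdeg_Xpow]] hb]]) simp
  have h2: "tdeg (3 * (X 2 ^ n)^2 * X 0 ^ 2) \<le> 3 * n + b"
    by (rule tw[OF tm[OF tn[OF tp[OF tdeg_Xpow]] tp[OF tX]]]) (use assms in linarith)
  have h3: "tdeg (X 0 ^ 3) \<le> 3 * n + b"
    by (rule tw[OF tp[OF tX]]) (use assms in linarith)
  have h4: "tdeg (6 * X 2 ^ n * X 0 * (X 1 + X 2 ^ b)) \<le> 3 * n + b"
    by (rule tw[OF tm[OF tm[OF tn[OF tdeg_Xpow] tX] hb]]) (use assms in linarith)
  have h5: "tdeg ((X 1 + X 2 ^ b)^2) \<le> 3 * n + b"
    by (rule tw[OF tp[OF hb]]) (use assms in linarith)
  have hL: "tdeg (A2 n b ^ 2 - A1 n ^ 3) \<le> 3 * n + b"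
    unfolding A_L by (intro ta td h1 h2 h3 h4 h5)
  have hk: "tdeg (A1 n ^ k) \<le> 2 * n * k"
    using tp[of "A1 n" "2*n" k] A1_deg[OF assms(1)] by (simp add: mult.commute)
  show "tdeg (A3 n b k) \<le> 3 * n + b + 2 * n * k"
  proof -
    have "tdeg (X 2) \<le> 3 * n + b + 2 * n * k" using tX[of 2] assms by linarith
    then show ?thesis unfolding A3_def using tm[OF hL hk] by (rule ta)
  qed
  have "\<And>t. ev3 (A3 n b k) (0,0,t) = poly (monom 1 1 + monom (16*4^k) (n*3 + b + n*2*k) + monom (4^k) (b*2 + n*2*k)) t"
  proof -
    fix t :: complex
    have "ev3 (A3 n b k) (0,0,t) = t + ((t^b + 8*(t^n)^3)^2 - (4*(t^n)^2)^3)*(4*(t^n)^2)^k"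
      by (simp add: A3_def A1_def A2_def)
    also have "\<dots> = t + 16*4^k*((t^n)^3*t^b*((t^n)^2)^k) + 4^k*((t^b)^2*((t^n)^2)^k)"
      by (rule A_cx)
    also have "\<dots> = poly (monom 1 1 + monom (16*4^k) (n*3 + b + n*2*k) + monom (4^k) (b*2 + n*2*k)) t"
      by (simp add: poly_monom power_add power_mult)
    finally show "ev3 (A3 n b k) (0,0,t) = poly (monom 1 1 + monom (16*4^k) (n*3 + b + n*2*k) + monom (4^k) (b*2 + n*2*k)) t" .
  qed
  then have "n*3 + b + n*2*k \<le> tdeg (A3 n b k)"
    by (rule tdeg_lower[OF A_poly3(3)]) (use assms in \<open>simp add: coeff_monom\<close>)
  then show "3 * n + b + 2 * n * k \<le> tdeg (A3 n b k)" by (simp add: mult.commute)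
qed

definition B1 :: "nat \<Rightarrow> mpoly" where "B1 n = X 0 + 64 * (X 2 ^ n)^2"
definition B2 :: "nat \<Rightarrow> nat \<Rightarrow> mpoly" where
  "B2 n b = X 1 + X 2 ^ b + 1280 * (X 2 ^ n)^3 * X 0 + 15 * X 2 ^ n * X 0 ^ 2 + 32768 * (X 2 ^ n)^5"
definition B3 :: "nat \<Rightarrow> nat \<Rightarrow> nat \<Rightarrow> mpoly" where
  "B3 n b k = X 2 + (B2 n b ^ 2 - B1 n ^ 5) * B1 n ^ k"
definition B4 :: "nat \<Rightarrow> mpoly" where
  "B4 n = X 2 + B1 n ^ 3"

lemma B_poly3: "poly3 (B1 n)" "poly3 (B2 n b)" "poly3 (B3 n b k)" "poly3 (B4 n)"
  unfolding B1_def B2_def B3_def B4_def by (intro poly3_I vars_I; simp)+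

lemma B_g2: "ev3 (B2 n b) (x, y, z) = y + ev3 (X 2 ^ b + 1280 * (X 2 ^ n)^3 * (X 0 - 64 * (X 2 ^ n)^2)
      + 15 * X 2 ^ n * (X 0 - 64 * (X 2 ^ n)^2)^2 + 32768 * (X 2 ^ n)^5) (ev3 (B1 n) (x, y, z), y, z)"
  by (simp add: B1_def B2_def algebra_simps)

lemma B_tame: "tame_automorphism (B1 n) (B2 n b) (B3 n b k)"
proof (rule construct[of "64 * (X 2 ^ n)^2" "X 2 ^ b + 1280 * (X 2 ^ n)^3 * (X 0 - 64 * (X 2 ^ n)^2)
      + 15 * X 2 ^ n * (X 0 - 64 * (X 2 ^ n)^2)^2 + 32768 * (X 2 ^ n)^5"
      "(X 1 ^ 2 - X 0 ^ 5) * X 0 ^ k"])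
  show "vars (64 * (X 2 ^ n)^2) \<subseteq> {1,2}" by (intro vars_I; simp)
  show "vars (X 2 ^ b + 1280 * (X 2 ^ n)^3 * (X 0 - 64 * (X 2 ^ n)^2)
      + 15 * X 2 ^ n * (X 0 - 64 * (X 2 ^ n)^2)^2 + 32768 * (X 2 ^ n)^5) \<subseteq> {0,2}" by (intro vars_I; simp)
  show "vars ((X 1 ^ 2 - X 0 ^ 5) * X 0 ^ k) \<subseteq> {0,1}" by (intro vars_I; simp)
  show "poly3 (B1 n)" "poly3 (B2 n b)" "poly3 (B3 n b k)" by (rule B_poly3)+
  show "\<And>x y z. ev3 (B2 n b) (x, y, z) = y + ev3 (X 2 ^ b + 1280 * (X 2 ^ n)^3 * (X 0 - 64 * (X 2 ^ n)^2)
      + 15 * X 2 ^ n * (X 0 - 64 * (X 2 ^ n)^2)^2 + 32768 * (X 2 ^ n)^5) (ev3 (B1 n) (x, y, z), y, z)"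
    by (rule B_g2)
qed (simp_all add: B1_def B3_def)

lemma B4_tame: "tame_automorphism (B1 n) (B2 n b) (B4 n)"
proof (rule construct[of "64 * (X 2 ^ n)^2" "X 2 ^ b + 1280 * (X 2 ^ n)^3 * (X 0 - 64 * (X 2 ^ n)^2)
      + 15 * X 2 ^ n * (X 0 - 64 * (X 2 ^ n)^2)^2 + 32768 * (X 2 ^ n)^5"
      "X 0 ^ 3"])
  show "vars (64 * (X 2 ^ n)^2) \<subseteq> {1,2}" by (intro vars_I; simp)
  show "vars (X 2 ^ b + 1280 * (X 2 ^ n)^3 * (X 0 - 64 * (X 2 ^ n)^2)
      + 15 * X 2 ^ n * (X 0 - 64 * (X 2 ^ n)^2)^2 + 32768 * (X 2 ^ n)^5) \<subseteq> {0,2}" by (intro vars_I; simp)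
  show "vars (X 0 ^ 3) \<subseteq> {0,1}" by (intro vars_I; simp)
  show "poly3 (B1 n)" "poly3 (B2 n b)" "poly3 (B4 n)" by (rule B_poly3)+
  show "\<And>x y z. ev3 (B2 n b) (x, y, z) = y + ev3 (X 2 ^ b + 1280 * (X 2 ^ n)^3 * (X 0 - 64 * (X 2 ^ n)^2)
      + 15 * X 2 ^ n * (X 0 - 64 * (X 2 ^ n)^2)^2 + 32768 * (X 2 ^ n)^5) (ev3 (B1 n) (x, y, z), y, z)"
    by (rule B_g2)
qed (simp_all add: B1_def B4_def)

lemma power5_eq_xxxxx: "(x::'a::monoid_mult) ^ 5 = x * x * x * x * x"
  by (simp add: eval_nat_numeral mult.assoc)

lemma B1_deg: "0 < n \<Longrightarrow> tdeg (B1 n) = 2 * n"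
proof (rule antisym)
  assume n: "0 < n"
  have "tdeg (X 0) \<le> 2 * n" using tX[of 0] n by linarith
  moreover have "tdeg (64 * (X 2 ^ n)^2) \<le> 2 * n" by (rule tn, rule tw[OF tp[OF tdeg_Xpow]]) simp
  ultimately show "tdeg (B1 n) \<le> 2 * n" unfolding B1_def by (rule ta)
  have "\<And>t. ev3 (B1 n) (0,0,t) = poly (monom 64 (2*n)) t"
    by (simp add: B1_def poly_monom power_mult mult.commute)
  then show "2 * n \<le> tdeg (B1 n)"
    by (rule tdeg_lower[OF B_poly3(1)]) simp
qed

lemma B2_deg: assumes "0 < n" "1 \<le> b" "b < 5 * n" shows "tdeg (B2 n b) = 5 * n"
proof (rule antisym)
  have "tdeg (X 1) \<le> 5 * n" using tX[of 1] assms by linarith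
  moreover have "tdeg (X 2 ^ b) \<le> 5 * n" using tdeg_Xpow[of 2 b] assms by linarith
  moreover have "tdeg (1280 * (X 2 ^ n)^3 * X 0) \<le> 5 * n"
    by (rule tw[OF tm[OF tn[OF tp[OF tdeg_Xpow]] tX]]) (use assms in linarith)
  moreover have "tdeg (15 * X 2 ^ n * X 0 ^ 2) \<le> 5 * n"
    by (rule tw[OF tm[OF tn[OF tdeg_Xpow] tp[OF tX]]]) (use assms in linarith)
  moreover have "tdeg (32768 * (X 2 ^ n)^5) \<le> 5 * n"
    by (rule tn, rule tw[OF tp[OF tdeg_Xpow]]) simp
  ultimately show "tdeg (B2 n b) \<le> 5 * n" unfolding B2_def by (intro ta)
  have "\<And>t. ev3 (B2 n b) (0,0,t) = poly (monom 1 b + monom 32768 (5*n)) t"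
    by (simp add: B2_def poly_monom power_mult mult.commute)
  then show "5 * n \<le> tdeg (B2 n b)"
    by (rule tdeg_lower[OF B_poly3(2)]) (use assms in simp)
qed

lemma B_L: "B2 n b ^ 2 - B1 n ^ 5 = 65536 * (X 2 ^ n)^5 * (X 1 + X 2 ^ b) + (X 1 + X 2 ^ b)^2
   + 2560 * X 0 * (X 1 + X 2 ^ b) * (X 2 ^ n)^3 + 30 * X 0 ^ 2 * (X 1 + X 2 ^ b) * X 2 ^ n
   - 2560 * X 0 ^ 3 * (X 2 ^ n)^4 - 95 * X 0 ^ 4 * (X 2 ^ n)^2 - X 0 ^ 5"
proof -
  have "\<And>(x::mpoly) y w. (y + 1280 * w^3 * x + 15 * w * x ^ 2 + 32768 * w^5)^2 - (x + 64 * w^2)^5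
     = 65536 * w^5 * y + y^2 + 2560 * x * y * w^3 + 30 * x^2 * y * w - 2560 * x^3 * w^4 - 95 * x^4 * w^2 - x^5"
    by (simp add: power2_eq_square power3_eq_cube power4_eq_xxxx power5_eq_xxxxx algebra_simps)
  from this[of "X 1 + X 2 ^ b" "X 2 ^ n" "X 0"] show ?thesis
    unfolding B1_def B2_def by (simp add: add.assoc)
qed

lemma B_cx: "(t::complex) + ((B + 32768*T^5)^2 - (64*T^2)^5)*(64*T^2)^k = t + 65536*64^k*(T^5*B*(T^2)^k) + 64^k*(B^2*(T^2)^k)"
  by (simp add: power_mult_distrib power2_eq_square power5_eq_xxxxx algebra_simps)

lemma B3_deg: assumes "0 < n" "1 \<le> b" "b < 5 * n" "3 \<le> n + b" shows "tdeg (B3 n b k) = 5 * n + b + 2 * n * k"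
proof (rule antisym)
  have hb: "tdeg (X 1 + X 2 ^ b) \<le> b"
    by (rule ta) (use tX[of 1] tdeg_Xpow[of 2 b] assms in linarith)+
  have h1: "tdeg (65536 * (X 2 ^ n)^5 * (X 1 + X 2 ^ b)) \<le> 5 * n + b"
    by (rule tw[OF tm[OF tn[OF tp[OF tdeg_Xpow]] hb]]) simp
  have h2: "tdeg ((X 1 + X 2 ^ b)^2) \<le> 5 * n + b"
    by (rule tw[OF tp[OF hb]]) (use assms in linarith)
  have h3: "tdeg (2560 * X 0 * (X 1 + X 2 ^ b) * (X 2 ^ n)^3) \<le> 5 * n + b"
    by (rule tw[OF tm[OF tm[OF tn[OF tX] hb] tp[OF tdeg_Xpow]]]) (use assms in linarith)
  have h4: "tdeg (30 * X 0 ^ 2 * (X 1 + X 2 ^ b) * X 2 ^ n) \<le> 5 * n + b"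
    by (rule tw[OF tm[OF tm[OF tn[OF tp[OF tX]] hb] tdeg_Xpow]]) (use assms in linarith)
  have h5: "tdeg (2560 * X 0 ^ 3 * (X 2 ^ n)^4) \<le> 5 * n + b"
    by (rule tw[OF tm[OF tn[OF tp[OF tX]] tp[OF tdeg_Xpow]]]) (use assms in linarith)
  have h6: "tdeg (95 * X 0 ^ 4 * (X 2 ^ n)^2) \<le> 5 * n + b"
    by (rule tw[OF tm[OF tn[OF tp[OF tX]] tp[OF tdeg_Xpow]]]) (use assms in linarith)
  have h7: "tdeg (X 0 ^ 5) \<le> 5 * n + b"
    by (rule tw[OF tp[OF tX]]) (use assms in linarith)
  have hL: "tdeg (B2 n b ^ 2 - B1 n ^ 5) \<le> 5 * n + b"
    unfolding B_L by (intro ta td h1 h2 h3 h4 h5 h6 h7)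
  have hk: "tdeg (B1 n ^ k) \<le> 2 * n * k"
    using tp[of "B1 n" "2*n" k] B1_deg[OF assms(1)] by (simp add: mult.commute)
  show "tdeg (B3 n b k) \<le> 5 * n + b + 2 * n * k"
  proof -
    have "tdeg (X 2) \<le> 5 * n + b + 2 * n * k" using tX[of 2] assms by linarith
    then show ?thesis unfolding B3_def using tm[OF hL hk] by (rule ta)
  qed
  have "\<And>t. ev3 (B3 n b k) (0,0,t) = poly (monom 1 1 + monom (65536*64^k) (n*5 + b + n*2*k) + monom (64^k) (b*2 + n*2*k)) t"
  proof -
    fix t :: complex
    have "ev3 (B3 n b k) (0,0,t) = t + ((t^b + 32768*(t^n)^5)^2 - (64*(t^n)^2)^5)*(64*(t^n)^2)^k"
      by (simp add: B3_def B1_def B2_def)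
    also have "\<dots> = t + 65536*64^k*((t^n)^5*t^b*((t^n)^2)^k) + 64^k*((t^b)^2*((t^n)^2)^k)"
      by (rule B_cx)
    also have "\<dots> = poly (monom 1 1 + monom (65536*64^k) (n*5 + b + n*2*k) + monom (64^k) (b*2 + n*2*k)) t"
      by (simp add: poly_monom power_add power_mult)
    finally show "ev3 (B3 n b k) (0,0,t) = poly (monom 1 1 + monom (65536*64^k) (n*5 + b + n*2*k) + monom (64^k) (b*2 + n*2*k)) t" .
  qed
  then have "n*5 + b + n*2*k \<le> tdeg (B3 n b k)"
    by (rule tdeg_lower[OF B_poly3(3)]) (use assms in \<open>simp add: coeff_monom\<close>)
  then show "5 * n + b + 2 * n * k \<le> tdeg (B3 n b k)" by (simp add: mult.commute)
qed

lemma B4_deg: assumes "0 < n" shows "tdeg (B4 n) = 6 * n"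
proof (rule antisym)
  have "tdeg (X 2) \<le> 6 * n" using tX[of 2] assms by linarith
  moreover have "tdeg (B1 n ^ 3) \<le> 6 * n" using tp[of "B1 n" "2*n" 3] B1_deg[OF assms] by simp
  ultimately show "tdeg (B4 n) \<le> 6 * n" unfolding B4_def by (rule ta)
  have "\<And>t. ev3 (B4 n) (0,0,t) = poly (monom 1 1 + monom (64^3) (n*6)) t"
    by (simp add: B4_def B1_def poly_monom power_mult_distrib flip: power_mult) (simp add: mult.commute)
  then have "n * 6 \<le> tdeg (B4 n)"
    by (rule tdeg_lower[OF B_poly3(4)]) (use assms in \<open>simp add: coeff_monom\<close>)
  then show "6 * n \<le> tdeg (B4 n)" by (simp add: mult.commute)
qed

lemma pair3: assumes "0 < n" shows "tame_pair (2 * n) (3 * n)"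
  unfolding tame_pair_def
proof (intro conjI allI impI)
  show "0 < 2 * n" "2 * n < 3 * n" using assms by auto
  show "\<not> 2 * n dvd 3 * n"
  proof
    assume "2 * n dvd 3 * n"
    then have "2 dvd (3::nat)" using assms by (simp add: mult.commute[of _ n])
    then show False by simp
  qed
  fix c :: nat assume c: "3 * n < c"
  define r where "r = c - 3 * n - 1"
  define k where "k = r div (2 * n)"
  define b where "b = 1 + r mod (2 * n)"
  have rk: "r = 2 * n * k + r mod (2 * n)" unfolding k_def by simp
  have m: "r mod (2 * n) < 2 * n" using assms by simp
  have b1: "1 \<le> b" "b < 3 * n" unfolding b_def using assms m by linarith+
  have cc: "c = 3 * n + b + 2 * n * k" using rk c unfolding b_def r_def by linarith
  show "\<exists>F1 F2 F3. tame_automorphism F1 F2 F3 \<and> mdeg F1 F2 F3 = (2 * n, 3 * n, c)"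
    by (rule exI[of _ "A1 n"], rule exI[of _ "A2 n b"], rule exI[of _ "A3 n b k"])
      (simp add: A_tame mdeg_def A1_deg[OF assms] A2_deg[OF assms b1] A3_deg[OF assms b1] cc)
qed

lemma pair5: assumes "0 < n" shows "tame_pair (2 * n) (5 * n)"
  unfolding tame_pair_def
proof (intro conjI allI impI)
  show "0 < 2 * n" "2 * n < 5 * n" using assms by auto
  show "\<not> 2 * n dvd 5 * n"
  proof
    assume "2 * n dvd 5 * n"
    then have "2 dvd (5::nat)" using assms by (simp add: mult.commute[of _ n])
    then show False by simp
  qed
  fix c :: nat assume c: "5 * n < c"
  show "\<exists>F1 F2 F3. tame_automorphism F1 F2 F3 \<and> mdeg F1 F2 F3 = (2 * n, 5 * n, c)"
  proof (cases "c = 5 * n + 1")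
    case True
    show ?thesis
    proof (cases "n = 1")
      case True
      have c6: "c = 6 * n" using \<open>c = 5 * n + 1\<close> True by simp
      have n1: "1 \<le> (2::nat)" "2 < 5 * n" using True by auto
      show ?thesis
        by (rule exI[of _ "B1 n"], rule exI[of _ "B2 n 2"], rule exI[of _ "B4 n"])
          (simp add: B4_tame mdeg_def B1_deg[OF assms] B2_deg[OF assms n1] B4_deg[OF assms] c6)
    next
      case False
      then have "2 \<le> n" using assms by linarith
      have n1: "1 \<le> (1::nat)" "1 < 5 * n" "3 \<le> n + 1" using \<open>2 \<le> n\<close> by auto
      have d2: "tdeg (B2 n 1) = 5 * n" by (rule B2_deg[OF assms n1(1,2)])
      have d3: "tdeg (B3 n 1 0) = 5 * n + 1 + 2 * n * 0" by (rule B3_deg[OF assms n1])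
      show ?thesis
        by (rule exI[of _ "B1 n"], rule exI[of _ "B2 n 1"], rule exI[of _ "B3 n 1 0"])
          (use d2 d3 \<open>c = 5 * n + 1\<close> in \<open>simp add: B_tame mdeg_def B1_deg[OF assms]\<close>)
    qed
  next
    case False
    define r where "r = c - 5 * n - 2"
    define k where "k = r div (2 * n)"
    define b where "b = 2 + r mod (2 * n)"
    have rk: "r = 2 * n * k + r mod (2 * n)" unfolding k_def by simp
    have m: "r mod (2 * n) < 2 * n" using assms by simp
    have b1: "1 \<le> b" "b < 5 * n" "3 \<le> n + b" unfolding b_def using assms m by linarith+
    have cc: "c = 5 * n + b + 2 * n * k" using rk c False unfolding b_def r_def by linarith
    show ?thesis
      by (rule exI[of _ "B1 n"], rule exI[of _ "B2 n b"], rule exI[of _ "B3 n b k"])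
        (simp add: B_tame mdeg_def B1_deg[OF assms] B2_deg[OF assms b1(1,2)] B3_deg[OF assms b1] cc)
  qed
qed

theorem corollary2:
  fixes n :: nat
  assumes "0 < n"
  shows "tame_pair (2 * n) (3 * n) \<and> tame_pair (2 * n) (5 * n)"
  using pair3[OF assms] pair5[OF assms] by simp
end
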